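(* Let $N\ge 2$, let $T_N$ be the homogeneous tree in which every vertex has degree $N$, and fix a root $o$. Let $m>1$ and $(p,q)\in G_4=\{(p,q): p<0,\ q=m-1\}$. Then for every $\lambda>0$ there exists a weight $\mu$ on $T_N$ such that $$W_o(n)\asymp e^{\lambda n}\quad\text{for } n\ge 2,$$ and the inequality $\Delta_m u+u^p|\nabla u|^q\le 0$ on $T_N$ admits a nontrivial positive solution.
   Context: A weight on a graph $(V,E)$ is a symmetric function $\mu:V\times V\to[0,\infty)$ with $\mu_{xy}=\mu_{yx}>0$ if and only if $x\sim y$ (adjacent); $\mu(x)=\sum_{y\sim x}\mu_{xy}$. For $m>1$, $\Delta_m u(x)=\frac{1}{\mu(x)}\sum_{y\sim x}\mu_{xy}|u(y)-u(x)|^{m-2}(u(y)-u(x))$ and $|\nabla u(x)|=\big(\sum_{y\sim x}\frac{\mu_{xy}}{2\mu(x)}(u(y)-u(x))^2\big)^{1/2}$. $d$ is the graph distance, $B(o,n)=\{x: d(o,x)\le n\}$, $W_o(n)=\sum_{x\in B(o,n),\,y\in V,\,d(o,x)<d(o,y)}\mu_{xy}$. $f(n)\asymp g(n)$ for $n\ge2$ means there are constants $c,C>0$ with $c\,g(n)\le f(n)\le C\,g(n)$ for all $n\ge 2$. A nontrivial positive solution is a non-constant $u:V\to(0,\infty)$ with $\Delta_m u(x)+u(x)^p|\nabla u(x)|^q\le0$ for all $x\in V$. *)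

theory Defs
  imports Complex_Main
begin

definition nbrs :: "'v set \<Rightarrow> ('v \<Rightarrow> 'v \<Rightarrow> bool) \<Rightarrow> 'v \<Rightarrow> 'v set" where
  "nbrs V adj x = {y \<in> V. adj x y}"

definition is_weight :: "'v set \<Rightarrow> ('v \<Rightarrow> 'v \<Rightarrow> bool) \<Rightarrow> ('v \<Rightarrow> 'v \<Rightarrow> real) \<Rightarrow> bool" where
  "is_weight V adj mu \<longleftrightarrow>
     (\<forall>x\<in>V. \<forall>y\<in>V. mu x y = mu y x \<and> mu x y \<ge> 0 \<and> (mu x y > 0 \<longleftrightarrow> adj x y))"

definition vmeas :: "'v set \<Rightarrow> ('v \<Rightarrow> 'v \<Rightarrow> bool) \<Rightarrow> ('v \<Rightarrow> 'v \<Rightarrow> real) \<Rightarrow> 'v \<Rightarrow> real" where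
  "vmeas V adj mu x = (\<Sum>y\<in>nbrs V adj x. mu x y)"

definition m_laplacian :: "'v set \<Rightarrow> ('v \<Rightarrow> 'v \<Rightarrow> bool) \<Rightarrow> ('v \<Rightarrow> 'v \<Rightarrow> real) \<Rightarrow> real
     \<Rightarrow> ('v \<Rightarrow> real) \<Rightarrow> 'v \<Rightarrow> real" where
  "m_laplacian V adj mu m u x =
     (1 / vmeas V adj mu x) *
     (\<Sum>y\<in>nbrs V adj x. mu x y * \<bar>u y - u x\<bar> powr (m - 2) * (u y - u x))"

definition grad_norm :: "'v set \<Rightarrow> ('v \<Rightarrow> 'v \<Rightarrow> bool) \<Rightarrow> ('v \<Rightarrow> 'v \<Rightarrow> real)
     \<Rightarrow> ('v \<Rightarrow> real) \<Rightarrow> 'v \<Rightarrow> real" where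
  "grad_norm V adj mu u x =
     sqrt (\<Sum>y\<in>nbrs V adj x. mu x y / (2 * vmeas V adj mu x) * (u y - u x)\<^sup>2)"

inductive walk :: "'v set \<Rightarrow> ('v \<Rightarrow> 'v \<Rightarrow> bool) \<Rightarrow> nat \<Rightarrow> 'v \<Rightarrow> 'v \<Rightarrow> bool"
  for V adj where
  walk0: "x \<in> V \<Longrightarrow> walk V adj 0 x x"
| walkS: "x \<in> V \<Longrightarrow> adj x z \<Longrightarrow> walk V adj n z y \<Longrightarrow> walk V adj (Suc n) x y"

definition gdist :: "'v set \<Rightarrow> ('v \<Rightarrow> 'v \<Rightarrow> bool) \<Rightarrow> 'v \<Rightarrow> 'v \<Rightarrow> nat" where
  "gdist V adj x y = (LEAST n. walk V adj n x y)"

definition gball :: "'v set \<Rightarrow> ('v \<Rightarrow> 'v \<Rightarrow> bool) \<Rightarrow> 'v \<Rightarrow> nat \<Rightarrow> 'v set" where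
  "gball V adj r n = {x \<in> V. gdist V adj r x \<le> n}"

text \<open>W_o(n): sum of mu_xy over x in B(o,n), y in V with d(o,x) < d(o,y).
  Since mu_xy = 0 unless x ~ y, it suffices to let y range over the neighbours of x
  (this keeps the index set finite).\<close>
definition W_out :: "'v set \<Rightarrow> ('v \<Rightarrow> 'v \<Rightarrow> bool) \<Rightarrow> ('v \<Rightarrow> 'v \<Rightarrow> real) \<Rightarrow> 'v \<Rightarrow> nat \<Rightarrow> real" where
  "W_out V adj mu r n =
     (\<Sum>x\<in>gball V adj r n. \<Sum>y\<in>{y \<in> nbrs V adj x. gdist V adj r x < gdist V adj r y}. mu x y)"

definition asymp_n2 :: "(nat \<Rightarrow> real) \<Rightarrow> (nat \<Rightarrow> real) \<Rightarrow> bool" where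
  "asymp_n2 f g \<longleftrightarrow> (\<exists>c C. c > 0 \<and> C > 0 \<and> (\<forall>n\<ge>2. c * g n \<le> f n \<and> f n \<le> C * g n))"

definition nontrivial_pos_solution :: "'v set \<Rightarrow> ('v \<Rightarrow> 'v \<Rightarrow> bool) \<Rightarrow> ('v \<Rightarrow> 'v \<Rightarrow> real)
     \<Rightarrow> real \<Rightarrow> real \<Rightarrow> real \<Rightarrow> ('v \<Rightarrow> real) \<Rightarrow> bool" where
  "nontrivial_pos_solution V adj mu m p q u \<longleftrightarrow>
     (\<forall>x\<in>V. u x > 0) \<and> (\<exists>x\<in>V. \<exists>y\<in>V. u x \<noteq> u y) \<and>
     (\<forall>x\<in>V. m_laplacian V adj mu m u x + u x powr p * grad_norm V adj mu u x powr q \<le> 0)"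

text \<open>Vertices: the root [] and words a_1 ... a_k with a_1 < N and a_i < N - 1 for i \<ge> 2;
  x ~ y iff one is the other extended by one letter. Root has N children,
  every other vertex has one parent and N-1 children, so every degree is N.\<close>
definition tree_V :: "nat \<Rightarrow> nat list set" where
  "tree_V N = {xs. xs = [] \<or> (xs ! 0 < N \<and> (\<forall>i. 0 < i \<and> i < length xs \<longrightarrow> xs ! i < N - 1))}"

definition tree_adj :: "nat list \<Rightarrow> nat list \<Rightarrow> bool" where
  "tree_adj x y \<longleftrightarrow> (\<exists>a. y = x @ [a]) \<or> (\<exists>a. x = y @ [a])"

end

theory Submission
  imports Defs
begin

lemma tree_V_prefix: "xs @ ys \<in> tree_V N \<Longrightarrow> xs \<in> tree_V N"
proof (cases "xs = []")
  case False
  assume h0: "xs @ ys \<in> tree_V N"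
  hence h: "xs @ ys \<in> {xs. xs = [] \<or> xs ! 0 < N \<and> (\<forall>i. 0 < i \<and> i < length xs \<longrightarrow> xs ! i < N - 1)}" by (simp add: tree_V_def)
  have "(xs@ys) ! 0 < N" using h False by auto
  moreover have "\<forall>i. 0 < i \<and> i < length xs \<longrightarrow> (xs@ys) ! i < N - 1" using h False by auto
  ultimately have "xs ! 0 < N \<and> (\<forall>i. 0 < i \<and> i < length xs \<longrightarrow> xs ! i < N - 1)"
    using False by (auto simp: nth_append)
  thus ?thesis by (simp add: tree_V_def)
qed (simp add: tree_V_def)

lemma set_tree_V: "x \<in> tree_V N \<Longrightarrow> N \<ge> 1 \<Longrightarrow> set x \<subseteq> {..<N}"
proof
  fix a assume x: "x \<in> tree_V N" and N: "N \<ge> 1" and a: "a \<in> set x"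
  then obtain i where i: "i < length x" "x ! i = a" by (auto simp: in_set_conv_nth)
  show "a \<in> {..<N}"
  proof (cases "i = 0")
    case True thus ?thesis using x i by (auto simp: tree_V_def)
  next
    case False thus ?thesis using x i N by (auto simp: tree_V_def)
  qed
qed

definition lev :: "nat \<Rightarrow> nat \<Rightarrow> nat list set" where
  "lev N k = {y \<in> tree_V N. length y = k}"

lemma finite_lev: "N \<ge> 1 \<Longrightarrow> finite (lev N k)"
proof -
  assume N: "N \<ge> 1"
  have "lev N k \<subseteq> {xs. set xs \<subseteq> {..<N} \<and> length xs = k}"
    using set_tree_V[OF _ N] by (auto simp: lev_def)
  thus ?thesis using finite_lists_length_eq[of "{..<N}" k] finite_subset by blast
qed

lemma ray_in: "N \<ge> 2 \<Longrightarrow> replicate k 0 \<in> tree_V N"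
  by (cases k) (auto simp: tree_V_def)

lemma alt_in: "N \<ge> 2 \<Longrightarrow> (1::nat) # replicate k 0 \<in> tree_V N"
  by (auto simp: tree_V_def nth_Cons split: nat.splits)

lemma card_lev: "N \<ge> 2 \<Longrightarrow> k \<ge> 1 \<Longrightarrow> card (lev N k) \<ge> 2"
proof -
  assume N: "N \<ge> 2" and k: "k \<ge> 1"
  have "{replicate k 0, 1 # replicate (k-1) 0} \<subseteq> lev N k"
    using ray_in[OF N] alt_in[OF N] k by (auto simp: lev_def)
  moreover have "replicate k (0::nat) \<noteq> 1 # replicate (k-1) 0" using k by (cases k) auto
  ultimately show ?thesis using card_mono[OF finite_lev[of N k]] N
    by (metis One_nat_def card_2_iff le_trans nat_1_add_1 one_le_numeral plus_1_eq_Suc)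
qed

inductive_simps walk0_simp: "walk V adj 0 x y"
lemma walk_len: "walk V tree_adj n x y \<Longrightarrow> length y \<le> length x + n"
  by (induction rule: walk.induct) (auto simp: tree_adj_def)

lemma walk_exists: "xs @ ys \<in> tree_V N \<Longrightarrow> walk (tree_V N) tree_adj (length ys) xs (xs @ ys)"
proof (induction ys arbitrary: xs)
  case Nil thus ?case by (auto intro: walk0)
next
  case (Cons a ys)
  have "walk (tree_V N) tree_adj (length ys) (xs @ [a]) ((xs @ [a]) @ ys)"
    using Cons by (metis append.assoc append_Cons append_Nil)
  moreover have "xs \<in> tree_V N" using Cons.prems tree_V_prefix by blast
  moreover have "tree_adj xs (xs @ [a])" by (simp add: tree_adj_def)
  ultimately show ?case by (auto intro!: walkS[where z="xs @ [a]"])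
qed

lemma gdist_root: "x \<in> tree_V N \<Longrightarrow> gdist (tree_V N) tree_adj [] x = length x"
  unfolding gdist_def
proof (rule Least_equality)
  assume "x \<in> tree_V N"
  then show "walk (tree_V N) tree_adj (length x) [] x" using walk_exists[of "[]" x] by simp
next
  fix n assume "walk (tree_V N) tree_adj n [] x"
  then show "length x \<le> n" using walk_len by fastforce
qed


definition fw :: "nat \<Rightarrow> real \<Rightarrow> nat list \<Rightarrow> real" where
  "fw N lam y = (if y = replicate (length y) 0 then exp (lam * (real (length y) - 1))
      else exp (lam * (real (length y) - 1)) / (real (card (lev N (length y))) - 1))"

definition muw :: "nat \<Rightarrow> real \<Rightarrow> nat list \<Rightarrow> nat list \<Rightarrow> real" where
  "muw N lam x y = (if tree_adj x y then (if length x < length y then fw N lam y else fw N lam x) else 0)"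

lemma fw_pos: "N \<ge> 2 \<Longrightarrow> length y \<ge> 1 \<Longrightarrow> fw N lam y > 0"
  using card_lev[of N "length y"] by (auto simp: fw_def)

lemma lev_sum: assumes N: "N \<ge> 2" and k: "k \<ge> 1"
  shows "(\<Sum>y\<in>lev N k. fw N lam y) = 2 * exp (lam * (real k - 1))"
proof -
  let ?r = "replicate k (0::nat)"
  let ?E = "exp (lam * (real k - 1))"
  have fin: "finite (lev N k)" using finite_lev N by simp
  have r: "?r \<in> lev N k" using ray_in[OF N] by (simp add: lev_def)
  have c2: "card (lev N k) \<ge> 2" using card_lev N k by simp
  have "(\<Sum>y\<in>lev N k. fw N lam y) = fw N lam ?r + (\<Sum>y\<in>lev N k - {?r}. fw N lam y)"
    using sum.remove[OF fin r] by simp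
  also have "fw N lam ?r = ?E" by (simp add: fw_def)
  also have "(\<Sum>y\<in>lev N k - {?r}. fw N lam y) = (\<Sum>y\<in>lev N k - {?r}. ?E / (real (card (lev N k)) - 1))"
    by (rule sum.cong) (auto simp: fw_def lev_def)
  also have "\<dots> = real (card (lev N k) - 1) * (?E / (real (card (lev N k)) - 1))"
    using card_Diff_singleton[OF r] by simp
  also have "\<dots> = ?E" using c2 by (simp add: of_nat_diff)
  finally show ?thesis by simp
qed

lemma adj_len: "tree_adj x y \<Longrightarrow> length y = Suc (length x) \<or> length x = Suc (length y)"
  by (auto simp: tree_adj_def)

lemma tree_adj_sym: "tree_adj x y = tree_adj y x" unfolding tree_adj_def by blast

lemma is_weight_muw: assumes N: "N \<ge> 2" shows "is_weight (tree_V N) tree_adj (muw N lam)"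
  unfolding is_weight_def
proof (intro ballI conjI)
  fix x y
  show "muw N lam x y = muw N lam y x"
  proof (cases "tree_adj x y")
    case True
    then have "length y = Suc (length x) \<or> length x = Suc (length y)" by (rule adj_len)
    moreover have "tree_adj y x" using True tree_adj_sym by blast
    ultimately show ?thesis using True unfolding muw_def by (elim disjE) simp_all
  next
    case False
    moreover have "\<not> tree_adj y x" using False tree_adj_sym by blast
    ultimately show ?thesis unfolding muw_def by simp
  qed
  have p: "tree_adj x y \<Longrightarrow> muw N lam x y > 0"
  proof -
    assume a: "tree_adj x y"
    from adj_len[OF a] show ?thesis
    proof
      assume "length y = Suc (length x)"
      thus ?thesis using a fw_pos[OF N, of y lam] by (simp add: muw_def)
    next
      assume "length x = Suc (length y)"
      thus ?thesis using a fw_pos[OF N, of x lam] by (simp add: muw_def)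
    qed
  qed
  have z: "\<not> tree_adj x y \<Longrightarrow> muw N lam x y = 0" by (simp add: muw_def)
  show "muw N lam x y \<ge> 0" using p z by (cases "tree_adj x y") auto
  show "(muw N lam x y > 0) = tree_adj x y" using p z by (cases "tree_adj x y") auto
qed

definition chl :: "nat \<Rightarrow> nat list \<Rightarrow> nat list set" where
  "chl N x = {y \<in> tree_V N. \<exists>a. y = x @ [a]}"

lemma chl_group: assumes N: "N \<ge> 2"
  shows "(\<Sum>x\<in>lev N j. \<Sum>y\<in>chl N x. fw N lam y) = 2 * exp (lam * real j)"
proof -
  have "(\<Sum>x\<in>lev N j. \<Sum>y\<in>chl N x. fw N lam y)
      = (\<Sum>x\<in>lev N j. \<Sum>y\<in>{y. y \<in> lev N (Suc j) \<and> butlast y = x}. fw N lam y)"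
  proof (rule sum.cong[OF refl])
    fix x assume x: "x \<in> lev N j"
    have "chl N x = {y. y \<in> lev N (Suc j) \<and> butlast y = x}"
    proof safe
      fix y assume "y \<in> chl N x" thus "y \<in> lev N (Suc j)" "butlast y = x"
        using x by (auto simp: chl_def lev_def)
    next
      fix y assume y: "y \<in> lev N (Suc j)" "x = butlast y"
      hence "y \<noteq> []" by (auto simp: lev_def)
      hence "y = butlast y @ [last y]" by simp
      thus "y \<in> chl N (butlast y)" using y by (auto simp: chl_def lev_def)
    qed
    thus "(\<Sum>y\<in>chl N x. fw N lam y) = (\<Sum>y\<in>{y. y \<in> lev N (Suc j) \<and> butlast y = x}. fw N lam y)"
      by simp
  qed
  also have "\<dots> = (\<Sum>y\<in>lev N (Suc j). fw N lam y)"
  proof (rule sum.group)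
    show "finite (lev N (Suc j))" "finite (lev N j)" using finite_lev N by auto
    show "butlast ` lev N (Suc j) \<subseteq> lev N j"
    proof
      fix x assume "x \<in> butlast ` lev N (Suc j)"
      then obtain y where y: "y \<in> lev N (Suc j)" "x = butlast y" by auto
      hence "y \<noteq> []" by (auto simp: lev_def)
      hence "y = butlast y @ [last y]" by simp
      thus "x \<in> lev N j" using y tree_V_prefix[of "butlast y" "[last y]" N] by (auto simp: lev_def)
    qed
  qed
  also have "\<dots> = 2 * exp (lam * real j)" using lev_sum[OF N, of "Suc j"] by simp
  finally show ?thesis .
qed

lemma nbrs_longer: assumes x: "x \<in> tree_V N"
  shows "{y \<in> nbrs (tree_V N) tree_adj x. gdist (tree_V N) tree_adj [] x < gdist (tree_V N) tree_adj [] y} = chl N x"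
proof safe
  fix y assume y: "y \<in> nbrs (tree_V N) tree_adj x"
    "gdist (tree_V N) tree_adj [] x < gdist (tree_V N) tree_adj [] y"
  hence yV: "y \<in> tree_V N" and a: "tree_adj x y" by (auto simp: nbrs_def)
  have "length x < length y" using y(2) gdist_root[OF x] gdist_root[OF yV] by simp
  hence "\<exists>a. y = x @ [a]" using a unfolding tree_adj_def by auto
  thus "y \<in> chl N x" using yV by (simp add: chl_def)
next
  fix y assume "y \<in> chl N x"
  then obtain a where yV: "y \<in> tree_V N" and a: "y = x @ [a]" by (auto simp: chl_def)
  thus "y \<in> nbrs (tree_V N) tree_adj x" by (auto simp: nbrs_def tree_adj_def)
  show "gdist (tree_V N) tree_adj [] x < gdist (tree_V N) tree_adj [] y"
    using gdist_root[OF x] gdist_root[OF yV] a by simp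
qed

lemma W_formula: assumes N: "N \<ge> 2"
  shows "W_out (tree_V N) tree_adj (muw N lam) [] n = (\<Sum>j\<le>n. 2 * exp (lam * real j))"
proof -
  have gb: "gball (tree_V N) tree_adj [] n = {x \<in> tree_V N. length x \<le> n}"
    using gdist_root[of _ N] by (auto simp: gball_def)
  have "W_out (tree_V N) tree_adj (muw N lam) [] n
      = (\<Sum>x\<in>{x \<in> tree_V N. length x \<le> n}. \<Sum>y\<in>chl N x. fw N lam y)"
    unfolding W_out_def gb
  proof (rule sum.cong[OF refl])
    fix x assume x: "x \<in> {x \<in> tree_V N. length x \<le> n}"
    show "(\<Sum>y\<in>{y \<in> nbrs (tree_V N) tree_adj x. gdist (tree_V N) tree_adj [] x < gdist (tree_V N) tree_adj [] y}. muw N lam x y)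
        = (\<Sum>y\<in>chl N x. fw N lam y)"
      unfolding nbrs_longer[of x N, OF conjunct1[OF x[simplified]]] using x
      by (intro sum.cong refl) (auto simp: chl_def muw_def tree_adj_def)
  qed
  also have "\<dots> = (\<Sum>j\<in>{..n}. \<Sum>x\<in>{x. x \<in> {x \<in> tree_V N. length x \<le> n} \<and> length x = j}. \<Sum>y\<in>chl N x. fw N lam y)"
  proof (rule sum.group[symmetric])
    have "{x \<in> tree_V N. length x \<le> n} \<subseteq> {xs. set xs \<subseteq> {..<N} \<and> length xs \<le> n}"
      using set_tree_V[of _ N] N by auto
    thus "finite {x \<in> tree_V N. length x \<le> n}" using finite_lists_length_le[of "{..<N}" n] finite_subset by blast
  qed auto
  also have "\<dots> = (\<Sum>j\<le>n. \<Sum>x\<in>lev N j. \<Sum>y\<in>chl N x. fw N lam y)"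
    by (intro sum.cong refl) (auto simp: lev_def)
  also have "\<dots> = (\<Sum>j\<le>n. 2 * exp (lam * real j))"
    using chl_group[OF N] by simp
  finally show ?thesis .
qed


definition zc :: "nat list \<Rightarrow> nat" where
  "zc x = length (takeWhile (\<lambda>a. a = 0) x)"

lemma butlast_rep: "butlast (replicate k a) = replicate (k - 1) a"
  by (simp add: butlast_conv_take)

lemma zc_rep: "zc (replicate k 0) = k"
  by (simp add: zc_def)

lemma not_rep_ex: "x \<noteq> replicate (length x) (0::nat) \<Longrightarrow> \<exists>b\<in>set x. b \<noteq> 0"
  by (metis replicate_length_same)

lemma offray_nbrs:
  assumes x: "x \<noteq> replicate (length x) 0" and y: "y \<in> nbrs (tree_V N) tree_adj x"
  shows "zc y = zc x"
proof -
  obtain b where b: "b \<in> set x" "b \<noteq> 0" using not_rep_ex[OF x] by blast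
  have "tree_adj x y" using y by (simp add: nbrs_def)
  then consider a where "y = x @ [a]" | a where "x = y @ [a]" unfolding tree_adj_def by blast
  then show ?thesis
  proof cases
    case 1 thus ?thesis using b by (simp add: zc_def)
  next
    case (2 a)
    show ?thesis
    proof (cases "\<exists>b\<in>set y. b \<noteq> 0")
      case True
      then obtain b' where "b' \<in> set y" "b' \<noteq> 0" by blast
      thus ?thesis using 2 by (simp add: zc_def)
    next
      case False
      hence yz: "\<And>b. b \<in> set y \<Longrightarrow> b = 0" by blast
      have "a \<noteq> 0" using b 2 yz by auto
      have tw: "takeWhile (\<lambda>a. a = 0) y = y" using yz by (simp add: takeWhile_eq_all_conv)
      have "takeWhile (\<lambda>a. a = 0) (y @ [a]) = y @ takeWhile (\<lambda>a. a = 0) [a]"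
        by (rule takeWhile_append2) (use yz in auto)
      thus ?thesis using 2 \<open>a \<noteq> 0\<close> tw by (simp add: zc_def del: takeWhile_eq_all_conv)
    qed
  qed
qed

lemma ray_nbrs:
  assumes N: "N \<ge> 2" and x: "x = replicate k (0::nat)"
  shows "replicate (Suc k) 0 \<in> nbrs (tree_V N) tree_adj x"
    and "k \<ge> 1 \<Longrightarrow> replicate (k - 1) 0 \<in> nbrs (tree_V N) tree_adj x"
    and "\<And>y. y \<in> nbrs (tree_V N) tree_adj x \<Longrightarrow> y \<noteq> replicate (Suc k) 0 \<Longrightarrow>
           (k \<ge> 1 \<longrightarrow> y \<noteq> replicate (k - 1) 0) \<Longrightarrow> zc y = k"
    and "nbrs (tree_V N) tree_adj x \<subseteq> insert (replicate (k - 1) 0) (lev N (Suc k))"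
    and "finite (nbrs (tree_V N) tree_adj x)"
proof -
  show "replicate (Suc k) 0 \<in> nbrs (tree_V N) tree_adj x"
  proof -
    have "replicate (Suc k) (0::nat) = x @ [0]" using x by (simp add: replicate_append_same)
    thus ?thesis using ray_in[OF N, of "Suc k"] unfolding nbrs_def tree_adj_def by auto
  qed
  show "k \<ge> 1 \<Longrightarrow> replicate (k - 1) 0 \<in> nbrs (tree_V N) tree_adj x"
  proof -
    assume k: "k \<ge> 1"
    obtain j where j: "k = Suc j" using k by (cases k) auto
    have "x = replicate (k - 1) 0 @ [0]" using x j by (simp add: replicate_append_same)
    thus ?thesis using ray_in[OF N, of "k - 1"] by (auto simp: nbrs_def tree_adj_def)
  qed
  show "\<And>y. y \<in> nbrs (tree_V N) tree_adj x \<Longrightarrow> y \<noteq> replicate (Suc k) 0 \<Longrightarrow>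
           (k \<ge> 1 \<longrightarrow> y \<noteq> replicate (k - 1) 0) \<Longrightarrow> zc y = k"
  proof -
    fix y assume y: "y \<in> nbrs (tree_V N) tree_adj x" and yc: "y \<noteq> replicate (Suc k) 0"
      and yp: "k \<ge> 1 \<longrightarrow> y \<noteq> replicate (k - 1) 0"
    have "tree_adj x y" using y by (simp add: nbrs_def)
    then consider a where "y = x @ [a]" | a where "x = y @ [a]" unfolding tree_adj_def by blast
    then show "zc y = k"
    proof cases
      case (1 a)
      have "a \<noteq> 0"
      proof
        assume "a = 0"
        hence "y = replicate (Suc k) 0" using 1 x by (simp add: replicate_append_same)
        thus False using yc by simp
      qed
      have "takeWhile (\<lambda>a. a = 0) (x @ [a]) = x @ takeWhile (\<lambda>a. a = 0) [a]"
        by (rule takeWhile_append2) (use x in auto)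
      thus ?thesis using 1 x \<open>a \<noteq> 0\<close> by (simp add: zc_def)
    next
      case (2 a)
      have "y = replicate (k - 1) 0" using 2 x
        proof -
        have "butlast x = y" using 2 by simp
        thus ?thesis using x by (simp add: butlast_rep)
      qed
      moreover have "k \<ge> 1" using 2 x by (cases k) auto
      ultimately show ?thesis using yp by simp
    qed
  qed
  show sub: "nbrs (tree_V N) tree_adj x \<subseteq> insert (replicate (k - 1) 0) (lev N (Suc k))"
  proof
    fix y assume y: "y \<in> nbrs (tree_V N) tree_adj x"
    have "tree_adj x y" "y \<in> tree_V N" using y by (auto simp: nbrs_def)
    then consider a where "y = x @ [a]" "y \<in> tree_V N" | a where "x = y @ [a]" unfolding tree_adj_def by blast
    then show "y \<in> insert (replicate (k - 1) 0) (lev N (Suc k))"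
    proof cases
      case 1 thus ?thesis using x by (simp add: lev_def)
    next
      case (2 a)
      have "y = replicate (k - 1) 0" using 2 x proof -
        have "butlast x = y" using 2 by simp
        thus ?thesis using x by (simp add: butlast_rep)
      qed
      thus ?thesis by simp
    qed
  qed
  show "finite (nbrs (tree_V N) tree_adj x)"
    using finite_subset[OF sub] finite_lev N by simp
qed

lemma sum_two:
  assumes "finite S" "c \<in> S" "k \<ge> 1 \<Longrightarrow> p \<in> S" "p \<noteq> c"
    and "\<And>y. y \<in> S \<Longrightarrow> y \<noteq> c \<Longrightarrow> (k \<ge> (1::nat) \<longrightarrow> y \<noteq> p) \<Longrightarrow> g y = (0::real)"
  shows "sum g S = g c + (if k = 0 then 0 else g p)"
proof (cases "k = 0")
  case True
  have "sum g S = sum g {c}"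
    by (rule sum.mono_neutral_right) (use assms True in auto)
  thus ?thesis using True by simp
next
  case False
  have "sum g S = sum g {p, c}"
    by (rule sum.mono_neutral_right) (use assms False in auto)
  thus ?thesis using False assms(4) by simp
qed


lemma fin_ineq:
  fixes X Q D mu Num U G :: real
  assumes X: "X > 0" and Q: "Q > 1" and D: "D > 0" and mu: "0 < mu" "mu \<le> 3 * X\<^sup>2 * Q\<^sup>2"
    and Num: "Num \<ge> D * X * (Q - 1)" and U: "0 \<le> U" "U \<le> (Q - 1) / (3 * Q\<^sup>2)"
    and G: "0 \<le> G" "G \<le> D / X"
  shows "1 / mu * (- Num) + U * G \<le> 0"
proof -
  have "U * G \<le> (Q - 1) / (3 * Q\<^sup>2) * (D / X)"
    by (rule mult_mono) (use U G Q in auto)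
  also have "\<dots> = D * X * (Q - 1) / (3 * X\<^sup>2 * Q\<^sup>2)"
    using X Q by (simp add: field_simps power2_eq_square)
  also have "\<dots> \<le> Num / (3 * X\<^sup>2 * Q\<^sup>2)"
    by (rule divide_right_mono) (use Num X Q in auto)
  also have "\<dots> \<le> Num / mu"
  proof (rule divide_left_mono)
    have "0 \<le> D * X * (Q - 1)" using D X Q by simp
    thus "0 \<le> Num" using Num by linarith
    show "0 < 3 * X\<^sup>2 * Q\<^sup>2 * mu" using X Q mu by simp
  qed (use mu in auto)
  finally show ?thesis by simp
qed

lemma pw_pos: "(d::real) > 0 \<Longrightarrow> \<bar>d\<bar> powr (m - 2) * d = d powr (m - 1)"
proof -
  assume d: "d > 0"
  have "d powr (m - 1) = d powr ((m - 2) + 1)" by simp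
  also have "\<dots> = d powr (m - 2) * d powr 1" by (rule powr_add)
  finally show ?thesis using d by simp
qed

lemma pw_neg: "(d::real) > 0 \<Longrightarrow> \<bar>-d\<bar> powr (m - 2) * (-d) = - (d powr (m - 1))"
  using pw_pos[of d m] by simp


definition uf :: "real \<Rightarrow> real \<Rightarrow> nat list \<Rightarrow> real" where
  "uf A c x = A + exp (- c * real (zc x))"

lemma offray_ineq:
  assumes x: "x \<noteq> replicate (length x) 0"
  shows "m_laplacian (tree_V N) tree_adj mu m (uf A c) x
     + uf A c x powr p * grad_norm (tree_V N) tree_adj mu (uf A c) x powr q \<le> 0"
proof -
  have e: "\<And>y. y \<in> nbrs (tree_V N) tree_adj x \<Longrightarrow> uf A c y = uf A c x"
    using offray_nbrs[OF x] by (simp add: uf_def)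
  have "m_laplacian (tree_V N) tree_adj mu m (uf A c) x = 0"
    unfolding m_laplacian_def using e by simp
  moreover have "grad_norm (tree_V N) tree_adj mu (uf A c) x = 0"
    unfolding grad_norm_def using e by simp
  ultimately show ?thesis by simp
qed

lemma muw_nonneg: assumes N: "N \<ge> 2" shows "muw N lam x y \<ge> 0"
proof (cases "tree_adj x y")
  case True
  from adj_len[OF True] show ?thesis
  proof
    assume "length y = Suc (length x)"
    thus ?thesis using True fw_pos[OF N, of y lam] by (simp add: muw_def)
  next
    assume "length x = Suc (length y)"
    thus ?thesis using True fw_pos[OF N, of x lam] by (simp add: muw_def)
  qed
qed (simp add: muw_def)

lemma ray_ineq:
  fixes m p lam :: real
  assumes N: "N \<ge> 2" and m: "m > 1" and p: "p < 0" and lam: "lam > 0"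
    and c: "c = lam / (2 * (m - 1))" and Q: "Q = exp (lam / 2)"
    and A: "A = ((Q - 1) / (3 * Q\<^sup>2)) powr (1 / p)"
    and x: "x = replicate k 0"
  shows "m_laplacian (tree_V N) tree_adj (muw N lam) m (uf A c) x
     + uf A c x powr p * grad_norm (tree_V N) tree_adj (muw N lam) (uf A c) x powr (m - 1) \<le> 0"
proof -
  define V where "V = tree_V N"
  define mu where "mu = muw N lam"
  define u where "u = uf A c"
  define nb where "nb = nbrs V tree_adj x"
  define cc where "cc = replicate (Suc k) (0::nat)"
  define pp where "pp = replicate (k - 1) (0::nat)"
  define X where "X = exp (lam * (real k - 1) / 2)"
  define dl where "dl = 1 - exp (- c)"
  define D where "D = dl powr (m - 1)"
  define B where "B = exp (- c * (real k - 1)) * dl"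
  define vm where "vm = vmeas V tree_adj mu x"
  have Xp: "X > 0" by (simp add: X_def)
  have Q1: "Q > 1" using Q lam by simp
  have cp: "c > 0" using c m lam by simp
  have dlp: "dl > 0" using cp by (simp add: dl_def)
  have Dp: "D > 0" using dlp by (simp add: D_def)
  have Bp: "B > 0" using dlp by (simp add: B_def)
  have cm: "c * (m - 1) = lam / 2"
  proof -
    have "m - 1 \<noteq> 0" using m by simp
    hence "lam / (2 * (m - 1)) * (m - 1) = lam / 2" by (simp add: field_simps)
    thus ?thesis using c by simp
  qed
  have XQ: "exp (lam * real k) = X\<^sup>2 * Q\<^sup>2"
  proof -
    have "X\<^sup>2 * Q\<^sup>2 = exp (lam * (real k - 1) / 2 + lam * (real k - 1) / 2 + (lam / 2 + lam / 2))"
      by (simp only: X_def Q exp_add power2_eq_square)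
    also have "\<dots> = exp (lam * real k)" by (simp add: field_simps)
    finally show ?thesis by simp
  qed
  have XQ2: "exp (lam * real k / 2) = X * Q"
  proof -
    have "X * Q = exp (lam * (real k - 1) / 2 + lam / 2)" by (simp only: X_def Q exp_add)
    also have "\<dots> = exp (lam * real k / 2)" by (simp add: field_simps)
    finally show ?thesis by simp
  qed
  have X2: "exp (lam * (real k - 1)) = X\<^sup>2"
  proof -
    have "X\<^sup>2 = exp (lam * (real k - 1) / 2 + lam * (real k - 1) / 2)"
      by (simp only: X_def exp_add power2_eq_square)
    also have "\<dots> = exp (lam * (real k - 1))" by simp
    finally show ?thesis by simp
  qed
  have BD: "B powr (m - 1) = D / X"
  proof -
    have "B powr (m - 1) = exp (- c * (real k - 1)) powr (m - 1) * D"
      unfolding B_def D_def by (rule powr_mult)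
    also have "exp (- c * (real k - 1)) powr (m - 1) = exp (- (lam * (real k - 1) / 2))"
    proof -
      have "- c * (real k - 1) * (m - 1) = - (c * (m - 1)) * (real k - 1)" by (simp add: algebra_simps)
      also have "\<dots> = - (lam * (real k - 1) / 2)" unfolding cm by simp
      finally show ?thesis unfolding exp_powr_real by simp
    qed
    also have "\<dots> = 1 / X" by (simp add: X_def exp_minus field_simps)
    finally show ?thesis by simp
  qed
  have ccD: "(exp (- c * real k) * dl) powr (m - 1) = D / (X * Q)"
  proof -
    have "(exp (- c * real k) * dl) powr (m - 1) = exp (- c * real k) powr (m - 1) * D"
      unfolding D_def by (rule powr_mult)
    also have "exp (- c * real k) powr (m - 1) = exp (- (lam * real k / 2))"
    proof -
      have "- c * real k * (m - 1) = - (c * (m - 1)) * real k" by (simp add: algebra_simps)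
      also have "\<dots> = - (lam * real k / 2)" unfolding cm by simp
      finally show ?thesis unfolding exp_powr_real by simp
    qed
    also have "\<dots> = 1 / (X * Q)" using XQ2 by (simp add: exp_minus field_simps)
    finally show ?thesis by simp
  qed
  have zx: "zc x = k" using x by (simp add: zc_rep)
  have ux: "u x = A + exp (- c * real k)" using zx by (simp add: u_def uf_def)
  have ucc: "u cc - u x = - (exp (- c * real k) * dl)"
  proof -
    have zcc: "zc cc = Suc k" unfolding cc_def by (rule zc_rep)
    have "u cc = A + exp (- c * real k + - c)" by (simp add: u_def uf_def zcc algebra_simps)
    also have "exp (- c * real k + - c) = exp (- c * real k) * exp (- c)" by (rule exp_add)
    finally show ?thesis using ux by (simp add: dl_def algebra_simps)
  qed
  have upp: "k \<ge> 1 \<Longrightarrow> u pp - u x = B"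
  proof -
    assume k: "k \<ge> 1"
    have zpp: "zc pp = k - 1" unfolding pp_def by (rule zc_rep)
    have "u pp = A + exp (- c * (real k - 1))" using k by (simp add: u_def uf_def zpp of_nat_diff)
    moreover have "exp (- c * real k) = exp (- c * (real k - 1)) * exp (- c)"
      by (simp add: exp_add[symmetric] algebra_simps)
    ultimately show ?thesis using ux by (simp add: B_def dl_def algebra_simps)
  qed
  have cceq: "cc = x @ [0]" using x by (simp add: cc_def replicate_append_same)
  have adjcc: "tree_adj x cc" unfolding tree_adj_def cceq by blast
  have mucc: "mu x cc = X\<^sup>2 * Q\<^sup>2"
    using adjcc x XQ by (simp add: mu_def muw_def cc_def fw_def)
  have adjpp: "k \<ge> 1 \<Longrightarrow> tree_adj x pp"
  proof -
    assume k: "k \<ge> 1"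
    obtain j where j: "k = Suc j" using k by (cases k) auto
    have "x = pp @ [0]" using x j by (simp add: pp_def replicate_append_same)
    thus ?thesis unfolding tree_adj_def by blast
  qed
  have mupp: "k \<ge> 1 \<Longrightarrow> mu x pp = X\<^sup>2"
  proof -
    assume k: "k \<ge> 1"
    have "\<not> length x < length pp" using x by (simp add: pp_def)
    hence "mu x pp = fw N lam x" using adjpp[OF k] by (simp add: mu_def muw_def)
    also have "\<dots> = X\<^sup>2" using x X2 by (simp add: fw_def)
    finally show ?thesis .
  qed
  have ppcc: "pp \<noteq> cc"
  proof
    assume "pp = cc" hence "length pp = length cc" by simp
    thus False by (simp add: pp_def cc_def del: replicate.simps)
  qed
  have fin: "finite nb" using ray_nbrs(5)[OF N x] by (simp add: nb_def V_def)
  have ccin: "cc \<in> nb" using ray_nbrs(1)[OF N x] by (simp add: nb_def V_def cc_def)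
  have ppin: "k \<ge> 1 \<Longrightarrow> pp \<in> nb" using ray_nbrs(2)[OF N x] by (simp add: nb_def V_def pp_def)
  have oth: "\<And>y. y \<in> nb \<Longrightarrow> y \<noteq> cc \<Longrightarrow> (k \<ge> 1 \<longrightarrow> y \<noteq> pp) \<Longrightarrow> u y = u x"
    using ray_nbrs(3)[OF N x] zx by (simp add: nb_def V_def cc_def pp_def u_def uf_def)
  have munn: "\<And>y. mu x y \<ge> 0" unfolding mu_def by (rule muw_nonneg[OF N])
  have lapsum: "(\<Sum>y\<in>nb. mu x y * \<bar>u y - u x\<bar> powr (m - 2) * (u y - u x))
      = - (X * Q * D) + (if k = 0 then 0 else X * D)"
  proof -
    have "(\<Sum>y\<in>nb. mu x y * \<bar>u y - u x\<bar> powr (m - 2) * (u y - u x))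
      = mu x cc * \<bar>u cc - u x\<bar> powr (m - 2) * (u cc - u x)
        + (if k = 0 then 0 else mu x pp * \<bar>u pp - u x\<bar> powr (m - 2) * (u pp - u x))"
      by (rule sum_two[OF fin ccin ppin ppcc]) (use oth in auto)
    also have "mu x cc * \<bar>u cc - u x\<bar> powr (m - 2) * (u cc - u x) = - (X * Q * D)"
    proof -
      have "\<bar>u cc - u x\<bar> powr (m - 2) * (u cc - u x) = - ((exp (- c * real k) * dl) powr (m - 1))"
        unfolding ucc by (rule pw_neg) (use dlp in simp)
      hence T: "\<bar>u cc - u x\<bar> powr (m - 2) * (u cc - u x) = - (D / (X * Q))" using ccD by simp
      have "mu x cc * \<bar>u cc - u x\<bar> powr (m - 2) * (u cc - u x) = X\<^sup>2 * Q\<^sup>2 * (- (D / (X * Q)))"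
        by (simp only: mult.assoc T mucc)
      thus ?thesis using Xp Q1 by (simp add: field_simps power2_eq_square)
    qed
    also have "(if k = 0 then 0 else mu x pp * \<bar>u pp - u x\<bar> powr (m - 2) * (u pp - u x))
        = (if k = 0 then 0 else X * D)"
    proof (cases "k = 0")
      case False
      hence k: "k \<ge> 1" by simp
      have "\<bar>u pp - u x\<bar> powr (m - 2) * (u pp - u x) = B powr (m - 1)"
        unfolding upp[OF k] by (rule pw_pos[OF Bp])
      hence T: "\<bar>u pp - u x\<bar> powr (m - 2) * (u pp - u x) = D / X" using BD by simp
      have "mu x pp * \<bar>u pp - u x\<bar> powr (m - 2) * (u pp - u x) = X\<^sup>2 * (D / X)"
        by (simp only: mult.assoc T mupp[OF k])
      thus ?thesis using False Xp by (simp add: field_simps power2_eq_square)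
    qed simp
    finally show ?thesis .
  qed
  have vmdef: "vm = (\<Sum>y\<in>nb. mu x y)" by (simp add: vm_def vmeas_def nb_def)
  have vmlow: "vm \<ge> X\<^sup>2 * Q\<^sup>2 + (if k = 0 then 0 else X\<^sup>2)"
  proof (cases "k = 0")
    case True
    have "(\<Sum>y\<in>{cc}. mu x y) \<le> (\<Sum>y\<in>nb. mu x y)"
      by (rule sum_mono2[OF fin]) (use ccin munn in auto)
    thus ?thesis using True mucc vmdef by simp
  next
    case False
    hence k: "k \<ge> 1" by simp
    have "(\<Sum>y\<in>{pp, cc}. mu x y) \<le> (\<Sum>y\<in>nb. mu x y)"
      by (rule sum_mono2[OF fin]) (use ccin ppin[OF k] munn in auto)
    thus ?thesis using False mucc mupp[OF k] vmdef ppcc by simp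
  qed
  have vmpos: "vm > 0"
  proof -
    have "X\<^sup>2 * Q\<^sup>2 > 0" using Xp Q1 by simp
    moreover have "(if k = 0 then 0 else X\<^sup>2) \<ge> 0" by simp
    ultimately show ?thesis using vmlow by linarith
  qed
  have vmup: "vm \<le> 3 * X\<^sup>2 * Q\<^sup>2"
  proof -
    let ?L = "lev N (Suc k)"
    have finL: "finite ?L" using finite_lev N by simp
    have sub: "nb \<subseteq> insert pp ?L" using ray_nbrs(4)[OF N x] by (simp add: nb_def V_def pp_def)
    have ppL: "pp \<notin> ?L" by (auto simp: lev_def pp_def)
    have "vm \<le> (\<Sum>y\<in>insert pp ?L. mu x y)"
      unfolding vmdef by (rule sum_mono2) (use finL sub munn in auto)
    also have "\<dots> = mu x pp + (\<Sum>y\<in>?L. mu x y)" using finL ppL by simp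
    also have "(\<Sum>y\<in>?L. mu x y) \<le> (\<Sum>y\<in>?L. fw N lam y)"
    proof (rule sum_mono)
      fix y assume y: "y \<in> ?L"
      show "mu x y \<le> fw N lam y"
      proof (cases "tree_adj x y")
        case True
        have "length x < length y" using x y by (simp add: lev_def)
        thus ?thesis using True by (simp add: mu_def muw_def)
      next
        case False
        have "fw N lam y > 0" using y by (intro fw_pos[OF N]) (simp add: lev_def)
        thus ?thesis using False by (simp add: mu_def muw_def)
      qed
    qed
    also have "(\<Sum>y\<in>?L. fw N lam y) = 2 * (X\<^sup>2 * Q\<^sup>2)"
      using lev_sum[OF N, of "Suc k" lam] XQ by simp
    also have "mu x pp \<le> X\<^sup>2"
    proof (cases "k = 0")
      case True
      have "\<not> tree_adj x x" by (simp add: tree_adj_def)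
      hence "mu x pp = 0" using True x by (simp add: mu_def muw_def pp_def)
      thus ?thesis by simp
    qed (simp add: mupp)
    finally have "vm \<le> X\<^sup>2 + 2 * (X\<^sup>2 * Q\<^sup>2)" by simp
    moreover have "X\<^sup>2 \<le> X\<^sup>2 * Q\<^sup>2" using Q1 Xp by simp
    ultimately show ?thesis by simp
  qed
  have gsum: "(\<Sum>y\<in>nb. mu x y / (2 * vm) * (u y - u x)\<^sup>2) \<le> B\<^sup>2"
  proof -
    have "(\<Sum>y\<in>nb. mu x y / (2 * vm) * (u y - u x)\<^sup>2)
      = mu x cc / (2 * vm) * (u cc - u x)\<^sup>2
        + (if k = 0 then 0 else mu x pp / (2 * vm) * (u pp - u x)\<^sup>2)"
      by (rule sum_two[OF fin ccin ppin ppcc]) (use oth in auto)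
    also have "\<dots> \<le> mu x cc / (2 * vm) * B\<^sup>2 + (if k = 0 then 0 else mu x pp / (2 * vm) * B\<^sup>2)"
    proof -
      have "exp (- c * real k) \<le> exp (- c * (real k - 1))" using cp by simp
      hence "exp (- c * real k) * dl \<le> B" unfolding B_def using dlp by simp
      hence "(u cc - u x)\<^sup>2 \<le> B\<^sup>2" unfolding ucc using dlp
        by (simp add: power_mono)
      moreover have "mu x cc / (2 * vm) \<ge> 0" using munn vmpos by simp
      ultimately have "mu x cc / (2 * vm) * (u cc - u x)\<^sup>2 \<le> mu x cc / (2 * vm) * B\<^sup>2"
        by (rule mult_left_mono)
      moreover have "(if k = 0 then 0 else mu x pp / (2 * vm) * (u pp - u x)\<^sup>2)
          = (if k = 0 then 0 else mu x pp / (2 * vm) * B\<^sup>2)" using upp by auto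
      ultimately show ?thesis by simp
    qed
    also have "\<dots> = (X\<^sup>2 * Q\<^sup>2 + (if k = 0 then 0 else X\<^sup>2)) / (2 * vm) * B\<^sup>2"
      using mucc mupp by (cases "k = 0") (simp_all add: add_divide_distrib distrib_right)
    also have "\<dots> \<le> vm / (2 * vm) * B\<^sup>2"
      by (intro mult_right_mono divide_right_mono vmlow) (use vmpos in auto)
    also have "\<dots> \<le> B\<^sup>2" using vmpos by simp
    finally show ?thesis .
  qed
  have gB: "grad_norm V tree_adj mu u x \<le> B"
  proof -
    have "grad_norm V tree_adj mu u x = sqrt (\<Sum>y\<in>nb. mu x y / (2 * vm) * (u y - u x)\<^sup>2)"
      by (simp add: grad_norm_def nb_def vm_def)
    also have "\<dots> \<le> sqrt (B\<^sup>2)" using gsum by (rule real_sqrt_le_mono)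
    also have "\<dots> = B" using Bp by simp
    finally show ?thesis .
  qed
  have g0: "grad_norm V tree_adj mu u x \<ge> 0"
  proof -
    have "(\<Sum>y\<in>nb. mu x y / (2 * vm) * (u y - u x)\<^sup>2) \<ge> 0"
      by (rule sum_nonneg) (use munn vmpos in simp)
    thus ?thesis by (simp add: grad_norm_def nb_def vm_def)
  qed
  have G: "grad_norm V tree_adj mu u x powr (m - 1) \<le> D / X"
    using powr_mono2[OF _ g0 gB, of "m - 1"] m BD by simp
  have G0: "grad_norm V tree_adj mu u x powr (m - 1) \<ge> 0" by simp
  define kap where "kap = (Q - 1) / (3 * Q\<^sup>2)"
  have kp: "kap > 0" using Q1 by (simp add: kap_def)
  have Ap: "A > 0" using kp unfolding A kap_def[symmetric] by simp
  have uA: "A \<le> u x" using ux by simp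
  have U: "u x powr p \<le> kap"
  proof -
    have "u x powr p \<le> A powr p" by (rule powr_mono2') (use p Ap uA in auto)
    also have "A powr p = kap powr (1 / p * p)" by (simp add: A kap_def powr_powr)
    also have "\<dots> = kap" using p kp by simp
    finally show ?thesis .
  qed
  have U0: "u x powr p \<ge> 0" by simp
  have lap: "m_laplacian V tree_adj mu m u x = 1 / vm * (- (X * Q * D - (if k = 0 then 0 else X * D)))"
    unfolding m_laplacian_def using lapsum by (simp add: nb_def vm_def)
  have Num: "X * Q * D - (if k = 0 then 0 else X * D) \<ge> D * X * (Q - 1)"
    using Xp Dp by (simp add: algebra_simps)
  have "1 / vm * (- (X * Q * D - (if k = 0 then 0 else X * D)))
      + u x powr p * grad_norm V tree_adj mu u x powr (m - 1) \<le> 0"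
    by (rule fin_ineq[OF Xp Q1 Dp vmpos vmup Num U0 _ G0 G]) (use U kap_def in simp)
  thus ?thesis using lap by (simp add: V_def mu_def u_def)
qed


lemma geo_bound:
  fixes lam :: real assumes lam: "lam > 0"
  shows "(\<Sum>j\<le>n. 2 * exp (lam * real j)) \<le> 2 * exp lam / (exp lam - 1) * exp (lam * real n)"
proof -
  define q where "q = exp lam"
  have q1: "q > 1" using lam by (simp add: q_def)
  have e: "\<And>j. exp (lam * real j) = q ^ j"
    by (simp add: q_def exp_of_nat_mult[symmetric] mult.commute)
  have "(\<Sum>j\<le>n. 2 * exp (lam * real j)) = 2 * (\<Sum>j<Suc n. q ^ j)"
    by (simp add: e sum_distrib_left lessThan_Suc_atMost)
  also have "(\<Sum>j<Suc n. q ^ j) = (1 - q ^ Suc n) / (1 - q)"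
    by (subst sum_gp_strict) (use q1 in simp)
  also have "\<dots> = (q ^ Suc n - 1) / (q - 1)"
    using minus_divide_divide[of "1 - q ^ Suc n" "1 - q"] by (simp only: minus_diff_eq)
  also have "\<dots> \<le> q ^ Suc n / (q - 1)"
    using q1 by (intro divide_right_mono) auto
  finally have "(\<Sum>j\<le>n. 2 * exp (lam * real j)) \<le> 2 * (q ^ Suc n / (q - 1))" by simp
  also have "\<dots> = 2 * q / (q - 1) * q ^ n" by simp
  finally show ?thesis by (simp add: e q_def)
qed

theorem mainTheorem11:
  fixes N :: nat and m p q lam :: real
  assumes "N \<ge> 2" and "m > 1" and "p < 0" and "q = m - 1" and "lam > 0"
  shows "\<exists>mu. is_weight (tree_V N) tree_adj mu \<and>
           asymp_n2 (W_out (tree_V N) tree_adj mu []) (\<lambda>n. exp (lam * real n)) \<and>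
           (\<exists>u. nontrivial_pos_solution (tree_V N) tree_adj mu m p q u)"
proof (intro exI conjI)
  note N = assms(1) and m = assms(2) and p = assms(3) and q = assms(4) and lam = assms(5)
  show "is_weight (tree_V N) tree_adj (muw N lam)" by (rule is_weight_muw[OF N])
  show "asymp_n2 (W_out (tree_V N) tree_adj (muw N lam) []) (\<lambda>n. exp (lam * real n))"
    unfolding asymp_n2_def
  proof (intro exI conjI allI impI)
    show "(1::real) > 0" by simp
    show "2 * exp lam / (exp lam - 1) > 0" using lam by simp
    fix n :: nat
    have "2 * exp (lam * real n) \<le> (\<Sum>j\<le>n. 2 * exp (lam * real j))"
      by (rule member_le_sum[where f = "\<lambda>j. 2 * exp (lam * real j)"]) auto
    moreover have "exp (lam * real n) > 0" by simp
    ultimately show "1 * exp (lam * real n) \<le> W_out (tree_V N) tree_adj (muw N lam) [] n"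
      unfolding W_formula[OF N] by linarith
    show "W_out (tree_V N) tree_adj (muw N lam) [] n \<le> 2 * exp lam / (exp lam - 1) * exp (lam * real n)"
      using W_formula[OF N] geo_bound[OF lam] by simp
  qed
  define c where "c = lam / (2 * (m - 1))"
  define Q where "Q = exp (lam / 2)"
  define A where "A = ((Q - 1) / (3 * Q\<^sup>2)) powr (1 / p)"
  have Q1: "Q > 1" using lam by (simp add: Q_def)
  have Ap: "A > 0" using Q1 by (simp add: A_def)
  have cp: "c > 0" using m lam by (simp add: c_def)
  show "nontrivial_pos_solution (tree_V N) tree_adj (muw N lam) m p q (uf A c)"
    unfolding nontrivial_pos_solution_def
  proof (intro conjI ballI)
    fix x assume "x \<in> tree_V N"
    show "uf A c x > 0" using Ap by (simp add: uf_def add_pos_pos)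
  next
    have "[] \<in> tree_V N" by (simp add: tree_V_def)
    moreover have "[0] \<in> tree_V N" using ray_in[OF N, of 1] by simp
    moreover have "uf A c [] \<noteq> uf A c [0]" using cp by (simp add: uf_def zc_def)
    ultimately show "\<exists>x\<in>tree_V N. \<exists>y\<in>tree_V N. uf A c x \<noteq> uf A c y" by blast
  next
    fix x assume "x \<in> tree_V N"
    show "m_laplacian (tree_V N) tree_adj (muw N lam) m (uf A c) x
      + uf A c x powr p * grad_norm (tree_V N) tree_adj (muw N lam) (uf A c) x powr q \<le> 0"
    proof (cases "x = replicate (length x) 0")
      case True
      show ?thesis unfolding q by (rule ray_ineq[OF N m p lam c_def Q_def A_def True])
    next
      case False
      show ?thesis by (rule offray_ineq[OF False])
    qed
  qed
qed

end
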